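(* Let $\Delta$ be a simplicial complex of subsets of $\{1,\dots,n\}$. Then $K_\Delta=\ker\tau_\Delta$ is generated by the following linear forms: for every pair $\mathscr J,\mathcal K\in\Delta$ and every choice of values $c_j\in\{1,\dots,a_j\}$ for $j\in\mathscr J\cap\mathcal K$, the form $$\sum_{\sigma}X_\sigma-\sum_{\rho}X_\rho,$$ where $\sigma$ ranges over tuples with $\sigma_j=c_j$ for $j\in\mathscr J\cap\mathcal K$, $\sigma_j\in\{1,\dots,a_j\}$ arbitrary for $j\in\mathscr J\setminus\mathcal K$, and $\sigma_j=\bullet$ for $j\notin\mathscr J$; and $\rho$ ranges over tuples with $\rho_j=c_j$ for $j\in\mathscr J\cap\mathcal K$, $\rho_j\in\{1,\dots,a_j\}$ arbitrary for $j\in\mathcal K\setminus\mathscr J$, and $\rho_j=\bullet$ for $j\notin\mathcal K$.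
   Context: $\mathbb K$ is a field, $a_1,\dots,a_n$ positive integers, $R=\mathbb K[x_{i_1,\dots,i_n}:1\le i_j\le a_j]$. For a tuple $\sigma$ with $\sigma_j\in\{1,\dots,a_j\}\cup\{+\}$, $x_\sigma$ is the sum of all $x_{i_1,\dots,i_n}$ with $i_j=\sigma_j$ whenever $\sigma_j\ne+$. A simplicial complex $\Delta$ is a nonempty collection of subsets of $\{1,\dots,n\}$ closed under subsets. $S_\Delta$ is the polynomial ring over $\mathbb K$ in variables $X_\sigma$, one for each tuple $\sigma$ with $\sigma_j\in\{1,\dots,a_j\}\cup\{\bullet\}$ and $\{j:\sigma_j\ne\bullet\}\in\Delta$. $\tau_\Delta:S_\Delta\to R$ sends $X_\sigma$ to $x_{\sigma''}$, where $\sigma''$ is $\sigma$ with each $\bullet$ replaced by $+$, and $K_\Delta=\ker\tau_\Delta$. *)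

theory Defs
  imports Main "HOL-Library.Poly_Mapping"
begin

text \<open>Multivariate polynomials over 'k in variables of type 'v are modelled as
  (('v =>0 nat) =>0 'k), with the convolution ring structure of Poly_Mapping.
  Coordinates are indexed by j in {1..n}. A multi-index (i_1,...,i_n) is a function
  nat \<Rightarrow> nat, zero outside {1..n}. A tuple sigma with entries in {1..a_j} or a
  wildcard (bullet / +) is a function nat \<Rightarrow> nat option, None = wildcard,
  None outside {1..n}.\<close>

definition var :: "'v \<Rightarrow> (('v \<Rightarrow>\<^sub>0 nat) \<Rightarrow>\<^sub>0 'k::comm_ring_1)" where
  "var v = Poly_Mapping.single (Poly_Mapping.single v 1) 1"

definition box :: "nat \<Rightarrow> (nat \<Rightarrow> nat) \<Rightarrow> (nat \<Rightarrow> nat) set" where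
  "box n a = {i. (\<forall>j\<in>{1..n}. i j \<in> {1..a j}) \<and> (\<forall>j. j \<notin> {1..n} \<longrightarrow> i j = 0)}"

definition xsum :: "nat \<Rightarrow> (nat \<Rightarrow> nat) \<Rightarrow> (nat \<Rightarrow> nat option)
    \<Rightarrow> (((nat \<Rightarrow> nat) \<Rightarrow>\<^sub>0 nat) \<Rightarrow>\<^sub>0 'k::comm_ring_1)" where
  "xsum n a \<sigma> = (\<Sum>i\<in>{i\<in>box n a. \<forall>j c. \<sigma> j = Some c \<longrightarrow> i j = c}. var i)"

definition Svars :: "nat \<Rightarrow> (nat \<Rightarrow> nat) \<Rightarrow> nat set set \<Rightarrow> (nat \<Rightarrow> nat option) set" where
  "Svars n a \<Delta> = {\<sigma>. (\<forall>j\<in>{1..n}. \<sigma> j = None \<or> \<sigma> j \<in> Some ` {1..a j})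
      \<and> (\<forall>j. j \<notin> {1..n} \<longrightarrow> \<sigma> j = None) \<and> {j. \<sigma> j \<noteq> None} \<in> \<Delta>}"

text \<open>S_Delta as the subring of polynomials only involving the variables X_sigma, sigma in Svars.\<close>
definition S_ring :: "nat \<Rightarrow> (nat \<Rightarrow> nat) \<Rightarrow> nat set set
    \<Rightarrow> (((nat \<Rightarrow> nat option) \<Rightarrow>\<^sub>0 nat) \<Rightarrow>\<^sub>0 'k::comm_ring_1) set" where
  "S_ring n a \<Delta> = {p. \<forall>m\<in>Poly_Mapping.keys p. Poly_Mapping.keys m \<subseteq> Svars n a \<Delta>}"

definition tau :: "nat \<Rightarrow> (nat \<Rightarrow> nat) \<Rightarrow> (((nat \<Rightarrow> nat option) \<Rightarrow>\<^sub>0 nat) \<Rightarrow>\<^sub>0 'k::comm_ring_1)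
    \<Rightarrow> (((nat \<Rightarrow> nat) \<Rightarrow>\<^sub>0 nat) \<Rightarrow>\<^sub>0 'k)" where
  "tau n a p = (\<Sum>m\<in>Poly_Mapping.keys p.
      Poly_Mapping.single 0 (Poly_Mapping.lookup p m) *
      (\<Prod>v\<in>Poly_Mapping.keys m. xsum n a v ^ Poly_Mapping.lookup m v))"

definition ideal_gen :: "'r::comm_ring_1 set \<Rightarrow> 'r set \<Rightarrow> 'r set" where
  "ideal_gen A G = {\<Sum>g\<in>F. h g * g | F h. finite F \<and> F \<subseteq> G \<and> (\<forall>g\<in>F. h g \<in> A)}"

definition simplicial_complex :: "nat \<Rightarrow> nat set set \<Rightarrow> bool" where
  "simplicial_complex n \<Delta> \<longleftrightarrow> \<Delta> \<noteq> {} \<and> (\<forall>F\<in>\<Delta>. F \<subseteq> {1..n}) \<and> (\<forall>F\<in>\<Delta>. \<forall>G. G \<subseteq> F \<longrightarrow> G \<in> \<Delta>)"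

definition tuples_JK :: "nat \<Rightarrow> (nat \<Rightarrow> nat) \<Rightarrow> nat set set \<Rightarrow> nat set \<Rightarrow> nat set
    \<Rightarrow> (nat \<Rightarrow> nat) \<Rightarrow> (nat \<Rightarrow> nat option) set" where
  "tuples_JK n a \<Delta> J K c = {\<sigma>\<in>Svars n a \<Delta>. (\<forall>j\<in>J \<inter> K. \<sigma> j = Some (c j))
      \<and> (\<forall>j\<in>J - K. \<sigma> j \<noteq> None) \<and> (\<forall>j. j \<notin> J \<longrightarrow> \<sigma> j = None)}"

definition gen_form :: "nat \<Rightarrow> (nat \<Rightarrow> nat) \<Rightarrow> nat set set \<Rightarrow> nat set \<Rightarrow> nat set
    \<Rightarrow> (nat \<Rightarrow> nat) \<Rightarrow> (((nat \<Rightarrow> nat option) \<Rightarrow>\<^sub>0 nat) \<Rightarrow>\<^sub>0 'k::comm_ring_1)" where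
  "gen_form n a \<Delta> J K c =
     (\<Sum>\<sigma>\<in>tuples_JK n a \<Delta> J K c. var \<sigma>) - (\<Sum>\<rho>\<in>tuples_JK n a \<Delta> K J c. var \<rho>)"

definition generators :: "nat \<Rightarrow> (nat \<Rightarrow> nat) \<Rightarrow> nat set set
    \<Rightarrow> (((nat \<Rightarrow> nat option) \<Rightarrow>\<^sub>0 nat) \<Rightarrow>\<^sub>0 'k::comm_ring_1) set" where
  "generators n a \<Delta> = {gen_form n a \<Delta> J K c | J K c. J \<in> \<Delta> \<and> K \<in> \<Delta>
      \<and> (\<forall>j\<in>J \<inter> K. c j \<in> {1..a j})}"

end

theory Submission
  imports Defs "HOL-Library.FuncSet"
begin


definition mon :: "('v \<Rightarrow> ('w \<Rightarrow>\<^sub>0 nat) \<Rightarrow>\<^sub>0 'k::comm_ring_1) \<Rightarrow> ('v \<Rightarrow>\<^sub>0 nat) \<Rightarrow> ('w \<Rightarrow>\<^sub>0 nat) \<Rightarrow>\<^sub>0 'k" where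
  "mon f m = (\<Prod>v\<in>Poly_Mapping.keys m. f v ^ Poly_Mapping.lookup m v)"

definition evp :: "('v \<Rightarrow> ('w \<Rightarrow>\<^sub>0 nat) \<Rightarrow>\<^sub>0 'k::comm_ring_1) \<Rightarrow> (('v \<Rightarrow>\<^sub>0 nat) \<Rightarrow>\<^sub>0 'k) \<Rightarrow> ('w \<Rightarrow>\<^sub>0 nat) \<Rightarrow>\<^sub>0 'k" where
  "evp f p = (\<Sum>m\<in>Poly_Mapping.keys p. Poly_Mapping.single 0 (Poly_Mapping.lookup p m) * mon f m)"

lemma tau_evp: "tau n a = evp (xsum n a)"
  by (simp add: fun_eq_iff tau_def evp_def mon_def)

lemma mon_ext:
  assumes "finite S" "Poly_Mapping.keys m \<subseteq> S"
  shows "mon f m = (\<Prod>v\<in>S. f v ^ Poly_Mapping.lookup m v)"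
  unfolding mon_def
  by (rule prod.mono_neutral_left) (use assms in \<open>auto simp: in_keys_iff\<close>)

lemma mon_add: "mon f (m1 + m2) = mon f m1 * mon f m2"
proof -
  let ?S = "Poly_Mapping.keys m1 \<union> Poly_Mapping.keys m2"
  have fin: "finite ?S" by simp
  have "mon f (m1 + m2) = (\<Prod>v\<in>?S. f v ^ Poly_Mapping.lookup (m1 + m2) v)"
    using keys_add[of m1 m2] by (intro mon_ext) auto
  also have "\<dots> = (\<Prod>v\<in>?S. f v ^ Poly_Mapping.lookup m1 v) * (\<Prod>v\<in>?S. f v ^ Poly_Mapping.lookup m2 v)"
    by (simp add: lookup_add power_add prod.distrib)
  also have "\<dots> = mon f m1 * mon f m2"
    by (subst (1 2) mon_ext[of ?S]) auto
  finally show ?thesis .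
qed

lemma mon_zero [simp]: "mon f 0 = 1"
  by (simp add: mon_def)

lemma evp_ext:
  assumes "finite S" "Poly_Mapping.keys p \<subseteq> S"
  shows "evp f p = (\<Sum>m\<in>S. Poly_Mapping.single 0 (Poly_Mapping.lookup p m) * mon f m)"
  unfolding evp_def
  by (rule sum.mono_neutral_left) (use assms in \<open>auto simp: in_keys_iff\<close>)

lemma evp_add: "evp f (p + q) = evp f p + evp f q"
proof -
  let ?S = "Poly_Mapping.keys p \<union> Poly_Mapping.keys q"
  have "evp f (p + q) = (\<Sum>m\<in>?S. Poly_Mapping.single 0 (Poly_Mapping.lookup (p + q) m) * mon f m)"
    using keys_add[of p q] by (intro evp_ext) auto
  also have "\<dots> = (\<Sum>m\<in>?S. Poly_Mapping.single 0 (Poly_Mapping.lookup p m) * mon f m)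
     + (\<Sum>m\<in>?S. Poly_Mapping.single 0 (Poly_Mapping.lookup q m) * mon f m)"
    by (simp add: lookup_add single_add distrib_right sum.distrib)
  also have "\<dots> = evp f p + evp f q"
    by (subst (1 2) evp_ext[of ?S]) auto
  finally show ?thesis .
qed

lemma evp_zero [simp]: "evp f 0 = 0"
  by (simp add: evp_def)

lemma evp_uminus: "evp f (- p) = - evp f p"
  using evp_add[of f p "- p"] by (simp add: add_eq_0_iff)

lemma evp_diff: "evp f (p - q) = evp f p - evp f q"
  using evp_add[of f p "- q"] evp_uminus[of f q] by simp

lemma evp_sum: "evp f (sum g A) = (\<Sum>x\<in>A. evp f (g x))"
  by (induction A rule: infinite_finite_induct) (auto simp: evp_add)

lemma evp_single: "evp f (Poly_Mapping.single m c) = Poly_Mapping.single 0 c * mon f m"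
  by (simp add: evp_def)

lemma poly_expand: "p = (\<Sum>m\<in>Poly_Mapping.keys p. Poly_Mapping.single m (Poly_Mapping.lookup p m))"
proof (rule poly_mapping_eqI)
  fix k
  show "Poly_Mapping.lookup p k = Poly_Mapping.lookup (\<Sum>m\<in>Poly_Mapping.keys p. Poly_Mapping.single m (Poly_Mapping.lookup p m)) k"
    by (simp add: lookup_sum lookup_single when_def in_keys_iff)
qed

lemma single0_mult: "Poly_Mapping.single 0 (a * b) = Poly_Mapping.single 0 a * Poly_Mapping.single 0 (b::'k::comm_ring_1)"
  by (simp add: mult_single)

lemma evp_single_mult: "evp f (Poly_Mapping.single m1 c1 * Poly_Mapping.single m2 c2)
   = evp f (Poly_Mapping.single m1 c1) * evp f (Poly_Mapping.single m2 c2)"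
proof -
  have "evp f (Poly_Mapping.single m1 c1 * Poly_Mapping.single m2 c2) = Poly_Mapping.single 0 (c1 * c2) * mon f (m1 + m2)"
    by (simp only: mult_single evp_single)
  also have "\<dots> = (Poly_Mapping.single 0 c1 * mon f m1) * (Poly_Mapping.single 0 c2 * mon f m2)"
    by (simp only: single0_mult mon_add mult_ac)
  finally show ?thesis by (simp only: evp_single)
qed

lemma evp_mult: "evp f (p * q) = evp f p * evp f q"
proof -
  have "p * q = (\<Sum>m1\<in>Poly_Mapping.keys p. \<Sum>m2\<in>Poly_Mapping.keys q.
      Poly_Mapping.single m1 (Poly_Mapping.lookup p m1) * Poly_Mapping.single m2 (Poly_Mapping.lookup q m2))"
    by (subst (1) poly_expand, subst (2) poly_expand) (simp add: sum_product)
  then have "evp f (p * q) = (\<Sum>m1\<in>Poly_Mapping.keys p. \<Sum>m2\<in>Poly_Mapping.keys q.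
      evp f (Poly_Mapping.single m1 (Poly_Mapping.lookup p m1)) * evp f (Poly_Mapping.single m2 (Poly_Mapping.lookup q m2)))"
    by (simp add: evp_sum evp_single_mult)
  also have "\<dots> = evp f p * evp f q"
    by (simp only: evp_single evp_def[of f p] evp_def[of f q] sum_product)
  finally show ?thesis .
qed

lemma evp_const [simp]: "evp f (Poly_Mapping.single 0 c) = Poly_Mapping.single 0 c"
  by (simp add: evp_single)

lemma evp_one [simp]: "evp f 1 = 1"
  using evp_const[of f 1] by simp

lemma evp_power: "evp f (p ^ k) = evp f p ^ k"
  by (induction k) (auto simp: evp_mult)

lemma evp_prod: "evp f (prod g A) = (\<Prod>x\<in>A. evp f (g x))"
  by (induction A rule: infinite_finite_induct) (auto simp: evp_mult)

lemma mon_var_single: "mon f (Poly_Mapping.single v (1::nat)) = f v"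
  unfolding mon_def by simp

lemma evp_var [simp]: "evp f (var v) = f v"
  unfolding var_def evp_single mon_var_single by simp



lemma single_var_pow: "Poly_Mapping.single (Poly_Mapping.single v k) (1::'k::comm_ring_1) = var v ^ k"
proof (induction k)
  case 0
  then show ?case by simp
next
  case (Suc k)
  have "Poly_Mapping.single (Poly_Mapping.single v (Suc k)) (1::'k) =
     Poly_Mapping.single (Poly_Mapping.single v 1 + Poly_Mapping.single v k) 1"
    by (simp add: single_add[symmetric])
  also have "\<dots> = var v * Poly_Mapping.single (Poly_Mapping.single v k) 1"
    by (simp add: mult_single var_def)
  finally show ?case using Suc by simp
qed

lemma single_sum_prod: "Poly_Mapping.single (sum g A) (1::'k::comm_ring_1) = (\<Prod>x\<in>A. Poly_Mapping.single (g x) 1)"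
proof (induction A rule: infinite_finite_induct)
  case (insert x F)
  then show ?case by (simp add: insert.IH[symmetric] mult_single)
qed auto

lemma mon_var: "mon var m = (Poly_Mapping.single m 1 :: _ \<Rightarrow>\<^sub>0 'k::comm_ring_1)"
proof -
  have "(Poly_Mapping.single m 1 :: _ \<Rightarrow>\<^sub>0 'k) = Poly_Mapping.single (\<Sum>v\<in>Poly_Mapping.keys m. Poly_Mapping.single v (Poly_Mapping.lookup m v)) 1"
    by (subst poly_expand) simp
  also have "\<dots> = (\<Prod>v\<in>Poly_Mapping.keys m. var v ^ Poly_Mapping.lookup m v)"
    by (simp add: single_sum_prod single_var_pow)
  finally show ?thesis by (simp add: mon_def)
qed

lemma single_mon: "Poly_Mapping.single m c = Poly_Mapping.single 0 c * mon var m"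
  by (simp add: mon_var mult_single)


lemma S_add: "p \<in> S_ring n a D \<Longrightarrow> q \<in> S_ring n a D \<Longrightarrow> p + q \<in> S_ring n a D"
  using keys_add[of p q] by (auto simp: S_ring_def)

lemma S_uminus: "p \<in> S_ring n a D \<Longrightarrow> - p \<in> S_ring n a D"
  by (auto simp: S_ring_def)

lemma S_diff: "p \<in> S_ring n a D \<Longrightarrow> q \<in> S_ring n a D \<Longrightarrow> p - q \<in> S_ring n a D"
  using S_add[of p n a D "- q"] S_uminus[of q] by simp

lemma S_mult: "p \<in> S_ring n a D \<Longrightarrow> q \<in> S_ring n a D \<Longrightarrow> p * q \<in> S_ring n a D"
proof -
  assume p: "p \<in> S_ring n a D" and q: "q \<in> S_ring n a D"
  show ?thesis unfolding S_ring_def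
  proof (rule CollectI, rule ballI)
    fix m assume "m \<in> Poly_Mapping.keys (p * q)"
    then obtain m1 m2 where "m = m1 + m2" "m1 \<in> Poly_Mapping.keys p" "m2 \<in> Poly_Mapping.keys q"
      using keys_mult[of p q] by blast
    then show "Poly_Mapping.keys m \<subseteq> Svars n a D"
      using keys_add[of m1 m2] p q by (auto simp: S_ring_def)
  qed
qed

lemma S_const: "Poly_Mapping.single 0 c \<in> S_ring n a D"
  by (auto simp: S_ring_def)

lemma S_zero: "0 \<in> S_ring n a D"
  using S_const[of 0] by simp

lemma S_one: "1 \<in> S_ring n a D"
  using S_const[of 1] by simp

lemma S_var: "v \<in> Svars n a D \<Longrightarrow> var v \<in> S_ring n a D"
  by (auto simp: S_ring_def var_def)

lemma S_power: "p \<in> S_ring n a D \<Longrightarrow> p ^ k \<in> S_ring n a D"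
  by (induction k) (auto simp: S_one S_mult)

lemma S_prod: "(\<And>x. x \<in> A \<Longrightarrow> g x \<in> S_ring n a D) \<Longrightarrow> prod g A \<in> S_ring n a D"
  by (induction A rule: infinite_finite_induct) (auto simp: S_one S_mult)

lemma S_sum: "(\<And>x. x \<in> A \<Longrightarrow> g x \<in> S_ring n a D) \<Longrightarrow> sum g A \<in> S_ring n a D"
  by (induction A rule: infinite_finite_induct) (auto simp: S_zero S_add)


lemma I_zero: "0 \<in> ideal_gen A G"
  unfolding ideal_gen_def by (rule CollectI, rule exI[of _ "{}"]) auto

lemma I_gen: "1 \<in> A \<Longrightarrow> g \<in> G \<Longrightarrow> g \<in> ideal_gen A G"
  unfolding ideal_gen_def
  by (rule CollectI, rule exI[of _ "{g}"], rule exI[of _ "\<lambda>_. 1"]) auto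

lemma I_add:
  assumes A0: "0 \<in> A" and Aadd: "\<And>x y. x \<in> A \<Longrightarrow> y \<in> A \<Longrightarrow> x + y \<in> A"
    and x: "x \<in> ideal_gen A G" and y: "y \<in> ideal_gen A G"
  shows "x + y \<in> ideal_gen A G"
proof -
  obtain F1 h1 where 1: "x = (\<Sum>g\<in>F1. h1 g * g)" "finite F1" "F1 \<subseteq> G" "\<forall>g\<in>F1. h1 g \<in> A"
    using x unfolding ideal_gen_def by blast
  obtain F2 h2 where 2: "y = (\<Sum>g\<in>F2. h2 g * g)" "finite F2" "F2 \<subseteq> G" "\<forall>g\<in>F2. h2 g \<in> A"
    using y unfolding ideal_gen_def by blast
  define h where "h g = (if g \<in> F1 then h1 g else 0) + (if g \<in> F2 then h2 g else 0)" for g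
  have hh: "h g * g = (if g \<in> F1 then h1 g * g else 0) + (if g \<in> F2 then h2 g * g else 0)" for g
    unfolding h_def by (simp add: distrib_right)
  have "(\<Sum>g\<in>F1 \<union> F2. h g * g) = (\<Sum>g\<in>F1 \<union> F2. (if g \<in> F1 then h1 g * g else 0))
     + (\<Sum>g\<in>F1 \<union> F2. (if g \<in> F2 then h2 g * g else 0))"
    unfolding hh by (rule sum.distrib)
  also have "\<dots> = x + y"
  proof -
    have "(F1 \<union> F2) \<inter> F1 = F1" "(F1 \<union> F2) \<inter> F2 = F2" by blast+
    then show ?thesis using 1 2 sum.inter_restrict[of "F1 \<union> F2" "\<lambda>g. h1 g * g" F1]
        sum.inter_restrict[of "F1 \<union> F2" "\<lambda>g. h2 g * g" F2] by simp
  qed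
  finally have e: "x + y = (\<Sum>g\<in>F1 \<union> F2. h g * g)" by simp
  have "\<forall>g\<in>F1 \<union> F2. h g \<in> A"
    using 1 2 A0 Aadd unfolding h_def by auto
  then show ?thesis unfolding ideal_gen_def
    by (intro CollectI exI[of _ "F1 \<union> F2"] exI[of _ h]) (use e 1 2 in auto)
qed

lemma I_mult:
  assumes Amult: "\<And>x y. x \<in> A \<Longrightarrow> y \<in> A \<Longrightarrow> x * y \<in> A"
    and s: "s \<in> A" and x: "x \<in> ideal_gen A G"
  shows "s * x \<in> ideal_gen A G"
proof -
  obtain F1 h1 where 1: "x = (\<Sum>g\<in>F1. h1 g * g)" "finite F1" "F1 \<subseteq> G" "\<forall>g\<in>F1. h1 g \<in> A"
    using x unfolding ideal_gen_def by blast
  have e: "s * x = (\<Sum>g\<in>F1. (s * h1 g) * g)"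
    using 1 by (simp add: sum_distrib_left mult.assoc)
  have "\<forall>g\<in>F1. s * h1 g \<in> A" using 1 s Amult by auto
  then show ?thesis unfolding ideal_gen_def
    by (intro CollectI exI[of _ F1] exI[of _ "\<lambda>g. s * h1 g"]) (use e 1 in auto)
qed

lemma sum_closed:
  assumes A0: "0 \<in> A" and Aadd: "\<And>x y. x \<in> A \<Longrightarrow> y \<in> A \<Longrightarrow> x + y \<in> A"
  shows "\<forall>x\<in>F. f x \<in> A \<Longrightarrow> sum f F \<in> A"
proof (induction F rule: infinite_finite_induct)
  case (insert x F) then show ?case using Aadd by simp
qed (auto simp: A0)

lemma I_sub:
  assumes A0: "0 \<in> A" and Aadd: "\<And>x y. x \<in> A \<Longrightarrow> y \<in> A \<Longrightarrow> x + y \<in> A"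
    and Amult: "\<And>x y. x \<in> A \<Longrightarrow> y \<in> A \<Longrightarrow> x * y \<in> A" and GA: "G \<subseteq> A"
    and x: "x \<in> ideal_gen A G"
  shows "x \<in> A"
proof -
  obtain F1 h1 where 1: "x = (\<Sum>g\<in>F1. h1 g * g)" "finite F1" "F1 \<subseteq> G" "\<forall>g\<in>F1. h1 g \<in> A"
    using x unfolding ideal_gen_def by blast
  have "\<forall>g\<in>F1. h1 g * g \<in> A" using 1 GA Amult by auto
  then have "(\<Sum>g\<in>F1. h1 g * g) \<in> A"
    using sum_closed[OF A0 Aadd, of F1 "\<lambda>g. h1 g * g"] by blast
  then show ?thesis using 1 by simp
qed

locale gens =
  fixes n :: nat and a :: "nat \<Rightarrow> nat" and D :: "nat set set"
    and G :: "(((nat \<Rightarrow> nat option) \<Rightarrow>\<^sub>0 nat) \<Rightarrow>\<^sub>0 'k::comm_ring_1) set"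
  assumes GS: "G \<subseteq> S_ring n a D"
begin

abbreviation "I \<equiv> ideal_gen (S_ring n a D) G"

lemma II_add: "x \<in> I \<Longrightarrow> y \<in> I \<Longrightarrow> x + y \<in> I"
  by (rule I_add) (auto simp: S_zero S_add)

lemma II_mult: "s \<in> S_ring n a D \<Longrightarrow> x \<in> I \<Longrightarrow> s * x \<in> I"
  by (rule I_mult) (auto simp: S_mult)

lemma II_uminus: "x \<in> I \<Longrightarrow> - x \<in> I"
  using II_mult[OF S_const[of "-1"], of x] by (simp add: single_uminus)

lemma II_diff: "x \<in> I \<Longrightarrow> y \<in> I \<Longrightarrow> x - y \<in> I"
  using II_add[of x "- y"] II_uminus[of y] by simp

lemma II_sum: "(\<And>x. x \<in> A \<Longrightarrow> g x \<in> I) \<Longrightarrow> sum g A \<in> I"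
  by (induction A rule: infinite_finite_induct) (auto simp: I_zero II_add)

lemma II_S: "x \<in> I \<Longrightarrow> x \<in> S_ring n a D"
  by (rule I_sub[OF S_zero _ _ GS]) (auto simp: S_add S_mult)

lemma II_gen: "g \<in> G \<Longrightarrow> g \<in> I"
  by (rule I_gen[OF S_one])

lemma II_cong_mult:
  assumes "x1 \<in> S_ring n a D" "y2 \<in> S_ring n a D" "x1 - y1 \<in> I" "x2 - y2 \<in> I"
  shows "x1 * x2 - y1 * y2 \<in> I"
proof -
  have "x1 * x2 - y1 * y2 = x1 * (x2 - y2) + (x1 - y1) * y2" by (simp add: algebra_simps)
  then show ?thesis using assms II_add II_mult by (metis mult.commute)
qed

lemma II_cong_power:
  assumes "x \<in> S_ring n a D" "y \<in> S_ring n a D" "x - y \<in> I"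
  shows "x ^ k - y ^ k \<in> I"
proof (induction k)
  case 0
  then show ?case using I_zero by simp
next
  case (Suc k)
  have "y ^ k \<in> S_ring n a D"
    by (rule S_power) (auto simp: assms)
  then show ?case using II_cong_mult[OF assms(1) _ assms(3) Suc] by simp
qed

lemma II_cong_prod:
  assumes "\<And>v. v \<in> K \<Longrightarrow> x v \<in> S_ring n a D" "\<And>v. v \<in> K \<Longrightarrow> y v \<in> S_ring n a D"
    "\<And>v. v \<in> K \<Longrightarrow> x v - y v \<in> I"
  shows "(\<Prod>v\<in>K. x v ^ e v) - (\<Prod>v\<in>K. y v ^ e v) \<in> I"
  using assms
proof (induction K rule: infinite_finite_induct)
  case (infinite A)
  then show ?case using I_zero by simp
next
  case empty
  then show ?case using I_zero by simp
next
  case (insert v F)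
  have pw: "x v ^ e v \<in> S_ring n a D"
    by (rule S_power) (auto simp: insert.prems)
  have "(\<Prod>u\<in>F. y u ^ e u) \<in> S_ring n a D"
    by (rule S_prod) (auto intro: S_power insert.prems)
  moreover have "x v ^ e v - y v ^ e v \<in> I"
    by (rule II_cong_power) (auto simp: insert.prems)
  ultimately show ?case
    using insert II_cong_mult[OF pw] by simp
qed

lemma congruence:
  fixes \<psi> :: "(((nat \<Rightarrow> nat option) \<Rightarrow>\<^sub>0 nat) \<Rightarrow>\<^sub>0 'k) \<Rightarrow> (((nat \<Rightarrow> nat option) \<Rightarrow>\<^sub>0 nat) \<Rightarrow>\<^sub>0 'k)"
  assumes \<psi>sum: "\<And>g (A :: ((nat \<Rightarrow> nat option) \<Rightarrow>\<^sub>0 nat) set). \<psi> (sum g A) = (\<Sum>x\<in>A. \<psi> (g x))"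
    and \<psi>mult: "\<And>p q. \<psi> (p * q) = \<psi> p * \<psi> q"
    and \<psi>prod: "\<And>g (A :: (nat \<Rightarrow> nat option) set). \<psi> (prod g A) = (\<Prod>x\<in>A. \<psi> (g x))"
    and \<psi>pow: "\<And>p k. \<psi> (p ^ k) = \<psi> p ^ k"
    and \<psi>const: "\<And>c. \<psi> (Poly_Mapping.single 0 c) = Poly_Mapping.single 0 c"
    and vars: "\<And>v. v \<in> Svars n a D \<Longrightarrow> var v - \<psi> (var v) \<in> I"
    and p: "p \<in> S_ring n a D"
  shows "p - \<psi> p \<in> I"
proof -
  have mono: "Poly_Mapping.single m c - \<psi> (Poly_Mapping.single m c) \<in> I"
    if m: "Poly_Mapping.keys m \<subseteq> Svars n a D" for m c
  proof -
    have e1: "Poly_Mapping.single m c = Poly_Mapping.single 0 c * (\<Prod>v\<in>Poly_Mapping.keys m. var v ^ Poly_Mapping.lookup m v)"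
      by (subst single_mon) (simp add: mon_def)
    have e2: "\<psi> (Poly_Mapping.single m c) = Poly_Mapping.single 0 c * (\<Prod>v\<in>Poly_Mapping.keys m. \<psi> (var v) ^ Poly_Mapping.lookup m v)"
      by (subst e1) (simp add: \<psi>mult \<psi>prod \<psi>pow \<psi>const)
    have "(\<Prod>v\<in>Poly_Mapping.keys m. var v ^ Poly_Mapping.lookup m v) - (\<Prod>v\<in>Poly_Mapping.keys m. \<psi> (var v) ^ Poly_Mapping.lookup m v) \<in> I"
    proof (rule II_cong_prod)
      fix v assume v: "v \<in> Poly_Mapping.keys m"
      then show "var v \<in> S_ring n a D" using m S_var by blast
      show "var v - \<psi> (var v) \<in> I" using v m vars by blast
      then have "var v - (var v - \<psi> (var v)) \<in> S_ring n a D"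
        using S_diff[OF \<open>var v \<in> S_ring n a D\<close> II_S] by blast
      then show "\<psi> (var v) \<in> S_ring n a D" by simp
    qed
    then have "Poly_Mapping.single 0 c * ((\<Prod>v\<in>Poly_Mapping.keys m. var v ^ Poly_Mapping.lookup m v) - (\<Prod>v\<in>Poly_Mapping.keys m. \<psi> (var v) ^ Poly_Mapping.lookup m v)) \<in> I"
      by (rule II_mult[OF S_const])
    then show ?thesis by (subst e2, subst e1) (simp add: right_diff_distrib)
  qed
  have "p - \<psi> p = (\<Sum>m\<in>Poly_Mapping.keys p. Poly_Mapping.single m (Poly_Mapping.lookup p m) - \<psi> (Poly_Mapping.single m (Poly_Mapping.lookup p m)))"
    by (subst (1 2) poly_expand) (simp add: \<psi>sum sum_subtractf)
  also have "\<dots> \<in> I"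
    by (rule II_sum, rule mono) (use p in \<open>auto simp: S_ring_def\<close>)
  finally show ?thesis .
qed

end



lemma finite_box: "finite (box n a)"
proof -
  have "box n a \<subseteq> (\<lambda>g j. if j \<in> {1..n} then g j else 0) ` PiE {1..n} (\<lambda>j. {1..a j})"
  proof
    fix i assume i: "i \<in> box n a"
    then have "i = (\<lambda>j. if j \<in> {1..n} then restrict i {1..n} j else 0)"
      by (auto simp: box_def fun_eq_iff)
    moreover have "restrict i {1..n} \<in> PiE {1..n} (\<lambda>j. {1..a j})"
      using i by (auto simp: box_def)
    ultimately show "i \<in> (\<lambda>g j. if j \<in> {1..n} then g j else 0) ` PiE {1..n} (\<lambda>j. {1..a j})"
      by blast
  qed
  then show ?thesis by (rule finite_subset) (auto intro: finite_PiE)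
qed

lemma finite_Svars: "finite (Svars n a D)"
proof -
  have "Svars n a D \<subseteq> (\<lambda>g j. if j \<in> {1..n} then g j else None) ` PiE {1..n} (\<lambda>j. insert None (Some ` {1..a j}))"
  proof
    fix i assume i: "i \<in> Svars n a D"
    then have "i = (\<lambda>j. if j \<in> {1..n} then restrict i {1..n} j else None)"
      by (auto simp: Svars_def fun_eq_iff)
    moreover have "restrict i {1..n} \<in> PiE {1..n} (\<lambda>j. insert None (Some ` {1..a j}))"
      using i by (auto simp: Svars_def)
    ultimately show "i \<in> (\<lambda>g j. if j \<in> {1..n} then g j else None) ` PiE {1..n} (\<lambda>j. insert None (Some ` {1..a j}))"
      by blast
  qed
  then show ?thesis by (rule finite_subset) (auto intro: finite_PiE)
qed

lemma finite_tuples: "finite (tuples_JK n a D J K c)"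
  by (rule finite_subset[OF _ finite_Svars[of n a D]]) (auto simp: tuples_JK_def)

definition matches :: "(nat \<Rightarrow> nat) \<Rightarrow> (nat \<Rightarrow> nat option) \<Rightarrow> bool" where
  "matches i \<sigma> \<longleftrightarrow> (\<forall>j c. \<sigma> j = Some c \<longrightarrow> i j = c)"

lemma xsum_alt: "xsum n a \<sigma> = (\<Sum>i\<in>box n a. if matches i \<sigma> then var i else 0)"
  unfolding xsum_def matches_def
  by (subst sum.inter_filter[symmetric]) (auto simp: finite_box)

lemma tau_var: "tau n a (var \<sigma>) = xsum n a \<sigma>"
  by (simp add: tau_evp)

lemma sum_tuples_xsum:
  assumes sc: "simplicial_complex n D" and J: "J \<in> D" and K: "K \<in> D"
  shows "(\<Sum>\<sigma>\<in>tuples_JK n a D J K c. xsum n a \<sigma>) =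
     (xsum n a (\<lambda>j. if j \<in> J \<inter> K then Some (c j) else None) :: ((nat \<Rightarrow> nat) \<Rightarrow>\<^sub>0 nat) \<Rightarrow>\<^sub>0 'k::comm_ring_1)"
proof -
  let ?T = "tuples_JK n a D J K c"
  let ?s0 = "\<lambda>j. if j \<in> J \<inter> K then Some (c j) else None"
  define si where "si i = (\<lambda>j. if j \<in> J then Some (i j) else None)" for i :: "nat \<Rightarrow> nat"
  have Jn: "J \<subseteq> {1..n}" using sc J by (auto simp: simplicial_complex_def)
  have inner: "(\<Sum>\<sigma>\<in>?T. if matches i \<sigma> then var i else 0) = (if matches i ?s0 then (var i :: ((nat \<Rightarrow> nat) \<Rightarrow>\<^sub>0 nat) \<Rightarrow>\<^sub>0 'k) else 0)"
    if i: "i \<in> box n a" for i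
  proof (cases "matches i ?s0")
    case True
    have "si i \<in> ?T"
    proof -
      have "{j. si i j \<noteq> None} = J" by (auto simp: si_def)
      then show ?thesis
        using i True Jn J unfolding tuples_JK_def Svars_def si_def matches_def box_def
        by (auto split: if_splits)
    qed
    moreover have "matches i \<sigma> \<longleftrightarrow> \<sigma> = si i" if "\<sigma> \<in> ?T" for \<sigma>
    proof
      assume m: "matches i \<sigma>"
      show "\<sigma> = si i"
      proof
        fix j show "\<sigma> j = si i j"
        proof (cases "j \<in> J")
          case False
          then show ?thesis using that unfolding tuples_JK_def si_def by auto
        next
          case True
          have "\<sigma> j \<noteq> None"
          proof (cases "j \<in> K")
            case True
            then show ?thesis using that \<open>j \<in> J\<close> unfolding tuples_JK_def by auto
          next
            case False
            then show ?thesis using that \<open>j \<in> J\<close> unfolding tuples_JK_def by auto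
          qed
          then obtain y where "\<sigma> j = Some y" by auto
          then show ?thesis using m True unfolding matches_def si_def by auto
        qed
      qed
    next
      assume "\<sigma> = si i" then show "matches i \<sigma>" by (auto simp: si_def matches_def)
    qed
    ultimately have "(\<Sum>\<sigma>\<in>?T. if matches i \<sigma> then var i else 0) = (\<Sum>\<sigma>\<in>?T. if \<sigma> = si i then var i else 0)"
      by (intro sum.cong) auto
    also have "\<dots> = var i" using \<open>si i \<in> ?T\<close> finite_tuples by (simp add: sum.delta')
    finally show ?thesis using True by simp
  next
    case False
    obtain j where j: "j \<in> J \<inter> K" "i j \<noteq> c j"
      using False unfolding matches_def by (auto split: if_splits)
    have "\<not> matches i \<sigma>" if "\<sigma> \<in> ?T" for \<sigma>
    proof -
      have "\<sigma> j = Some (c j)" using that j unfolding tuples_JK_def by auto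
      then show ?thesis using j unfolding matches_def by auto
    qed
    then show ?thesis using False by simp
  qed
  have "(\<Sum>\<sigma>\<in>?T. xsum n a \<sigma>) = (\<Sum>\<sigma>\<in>?T. \<Sum>i\<in>box n a. if matches i \<sigma> then (var i :: ((nat \<Rightarrow> nat) \<Rightarrow>\<^sub>0 nat) \<Rightarrow>\<^sub>0 'k) else 0)"
    by (simp add: xsum_alt)
  also have "\<dots> = (\<Sum>i\<in>box n a. \<Sum>\<sigma>\<in>?T. if matches i \<sigma> then var i else 0)"
    by (rule sum.swap)
  also have "\<dots> = (\<Sum>i\<in>box n a. if matches i ?s0 then var i else 0)"
    by (rule sum.cong) (auto simp: inner)
  also have "\<dots> = xsum n a ?s0" by (simp add: xsum_alt)
  finally show ?thesis .
qed

lemma tau_gen: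
  assumes sc: "simplicial_complex n D" and J: "J \<in> D" and K: "K \<in> D"
  shows "tau n a (gen_form n a D J K c :: ((nat \<Rightarrow> nat option) \<Rightarrow>\<^sub>0 nat) \<Rightarrow>\<^sub>0 'k::comm_ring_1) = 0"
proof -
  have "tau n a (gen_form n a D J K c :: ((nat \<Rightarrow> nat option) \<Rightarrow>\<^sub>0 nat) \<Rightarrow>\<^sub>0 'k) =
     (\<Sum>\<sigma>\<in>tuples_JK n a D J K c. xsum n a \<sigma>) - (\<Sum>\<sigma>\<in>tuples_JK n a D K J c. xsum n a \<sigma>)"
    by (simp add: gen_form_def tau_evp evp_diff evp_sum)
  also have "\<dots> = 0"
  proof -
    have 1: "(\<Sum>\<sigma>\<in>tuples_JK n a D J K c. xsum n a \<sigma>) = (xsum n a (\<lambda>j. if j \<in> J \<inter> K then Some (c j) else None) :: ((nat \<Rightarrow> nat) \<Rightarrow>\<^sub>0 nat) \<Rightarrow>\<^sub>0 'k)"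
      by (rule sum_tuples_xsum[OF sc J K])
    have 2: "(\<Sum>\<sigma>\<in>tuples_JK n a D K J c. xsum n a \<sigma>) = (xsum n a (\<lambda>j. if j \<in> K \<inter> J then Some (c j) else None) :: ((nat \<Rightarrow> nat) \<Rightarrow>\<^sub>0 nat) \<Rightarrow>\<^sub>0 'k)"
      by (rule sum_tuples_xsum[OF sc K J])
    show ?thesis unfolding 1 2 Int_commute[of K J] by simp
  qed
  finally show ?thesis .
qed

lemma gen_S: "gen_form n a D J K c \<in> S_ring n a D"
  unfolding gen_form_def
  by (intro S_diff S_sum S_var) (auto simp: tuples_JK_def)

lemma generators_S: "generators n a D \<subseteq> S_ring n a D"
  using gen_S by (auto simp: generators_def)

lemma tau_generators:
  assumes sc: "simplicial_complex n D" and g: "g \<in> generators n a D"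
  shows "tau n a g = 0"
  using g tau_gen[OF sc] by (auto simp: generators_def)



definition cf :: "(nat \<Rightarrow> nat) \<Rightarrow> nat \<Rightarrow> nat \<Rightarrow> nat option \<Rightarrow> 'k::comm_ring_1" where
  "cf a j t u = (if u = None then (if t = a j then 1 else 0)
      else if t = a j then -1 else if u = Some t then 1 else 0)"

definition good :: "nat \<Rightarrow> (nat \<Rightarrow> nat) \<Rightarrow> nat set set \<Rightarrow> (nat \<Rightarrow> nat option) set" where
  "good n a D = {\<tau> \<in> Svars n a D. \<forall>j. \<tau> j \<noteq> Some (a j)}"

definition phiv :: "nat \<Rightarrow> (nat \<Rightarrow> nat) \<Rightarrow> nat set set \<Rightarrow> (nat \<Rightarrow> nat)
    \<Rightarrow> ((nat \<Rightarrow> nat option) \<Rightarrow>\<^sub>0 nat) \<Rightarrow>\<^sub>0 'k::comm_ring_1" where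
  "phiv n a D i = (\<Sum>\<tau>\<in>good n a D. Poly_Mapping.single 0 (\<Prod>j\<in>{1..n}. cf a j (i j) (\<tau> j)) * var \<tau>)"

definition Bset :: "(nat \<Rightarrow> nat) \<Rightarrow> (nat \<Rightarrow> nat option) \<Rightarrow> nat \<Rightarrow> nat set" where
  "Bset a \<sigma> j = (case \<sigma> j of None \<Rightarrow> {1..a j} | Some c \<Rightarrow> {c})"

lemma factor:
  assumes "a j > 0" "s \<noteq> Some (a j)" "s = None \<or> s \<in> Some ` {1..a j}"
    "u \<noteq> Some (a j)" "u = None \<or> u \<in> Some ` {1..a j}"
  shows "(\<Sum>t\<in>(case s of None \<Rightarrow> {1..a j} | Some c \<Rightarrow> {c}). (cf a j t u :: 'k::comm_ring_1)) = (if u = s then 1 else 0)"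
proof (cases s)
  case None
  show ?thesis
  proof (cases u)
    case None
    have "(\<Sum>t\<in>{1..a j}. (cf a j t u :: 'k)) = (\<Sum>t\<in>{1..a j}. if t = a j then 1 else 0)"
      by (rule sum.cong) (auto simp: cf_def None)
    also have "\<dots> = 1" using assms(1) by (simp add: sum.delta')
    finally show ?thesis using \<open>s = None\<close> None by simp
  next
    case (Some v)
    have v: "v \<noteq> a j" "v \<in> {1..a j}" using assms Some by auto
    have "(\<Sum>t\<in>{1..a j}. (cf a j t u :: 'k)) = (\<Sum>t\<in>{1..a j}. (if t = a j then -1 else 0) + (if t = v then 1 else 0))"
      by (rule sum.cong) (use v in \<open>auto simp: cf_def Some\<close>)
    also have "\<dots> = 0" using assms(1) v by (simp add: sum.distrib sum.delta')
    finally show ?thesis using \<open>s = None\<close> Some by simp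
  qed
next
  case (Some c)
  have "c \<noteq> a j" using assms Some by auto
  then show ?thesis using Some by (cases u) (auto simp: cf_def)
qed

lemma sum_box_prod:
  assumes \<sigma>: "\<sigma> \<in> Svars n a D"
  shows "(\<Sum>i\<in>{i \<in> box n a. matches i \<sigma>}. \<Prod>j\<in>{1..n}. (f j (i j) :: 'k::comm_ring_1))
       = (\<Prod>j\<in>{1..n}. \<Sum>t\<in>Bset a \<sigma> j. f j t)"
proof -
  have fin: "finite (Bset a \<sigma> j)" for j by (auto simp: Bset_def split: option.splits)
  have "(\<Prod>j\<in>{1..n}. \<Sum>t\<in>Bset a \<sigma> j. f j t) = (\<Sum>g\<in>PiE {1..n} (Bset a \<sigma>). \<Prod>j\<in>{1..n}. f j (g j))"
    by (rule prod_sum_PiE) (auto simp: fin)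
  also have "\<dots> = (\<Sum>i\<in>{i \<in> box n a. matches i \<sigma>}. \<Prod>j\<in>{1..n}. f j (i j))"
  proof (rule sum.reindex_bij_witness[of _ "\<lambda>i. restrict i {1..n}" "\<lambda>g j. if j \<in> {1..n} then g j else 0"])
    fix g assume g: "g \<in> PiE {1..n} (Bset a \<sigma>)"
    show "restrict (\<lambda>j. if j \<in> {1..n} then g j else 0) {1..n} = g"
      using g by (auto simp: fun_eq_iff PiE_def extensional_def)
    have h1: "\<forall>j\<in>{1..n}. g j \<in> Bset a \<sigma> j" using g by auto
    have h2: "\<forall>j. j \<notin> {1..n} \<longrightarrow> \<sigma> j = None" using \<sigma> by (auto simp: Svars_def)
    have h3: "\<forall>j\<in>{1..n}. \<forall>c. \<sigma> j = Some c \<longrightarrow> c \<in> {1..a j}" using \<sigma> by (auto simp: Svars_def)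
    have 1: "\<forall>j\<in>{1..n}. g j \<in> {1..a j}"
    proof
      fix j assume j: "j \<in> {1..n}"
      have gj: "g j \<in> Bset a \<sigma> j" using h1 j by blast
      show "g j \<in> {1..a j}"
      proof (cases "\<sigma> j")
        case None
        then have "Bset a \<sigma> j = {1..a j}" by (simp add: Bset_def)
        then show ?thesis using gj by simp
      next
        case (Some c)
        then have "Bset a \<sigma> j = {c}" by (simp add: Bset_def)
        moreover have "c \<in> {1..a j}" using h3 j Some by blast
        ultimately show ?thesis using gj by simp
      qed
    qed
    have 2: "\<forall>j c. \<sigma> j = Some c \<longrightarrow> j \<in> {1..n} \<and> g j = c"
    proof (intro allI impI)
      fix j c assume s: "\<sigma> j = Some c"
      then have j: "j \<in> {1..n}" using h2 by auto
      have gj: "g j \<in> Bset a \<sigma> j" using h1 j by blast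
      moreover have "Bset a \<sigma> j = {c}" using s by (simp add: Bset_def)
      ultimately show "j \<in> {1..n} \<and> g j = c" using j by simp
    qed
    have "(\<lambda>j. if j \<in> {1..n} then g j else 0) \<in> box n a"
      unfolding box_def using 1 by simp
    moreover have "matches (\<lambda>j. if j \<in> {1..n} then g j else 0) \<sigma>"
      unfolding matches_def
    proof (intro allI impI)
      fix j c assume "\<sigma> j = Some c"
      then have "j \<in> {1..n} \<and> g j = c" using 2 by blast
      then show "(if j \<in> {1..n} then g j else 0) = c" by simp
    qed
    ultimately show "(\<lambda>j. if j \<in> {1..n} then g j else 0) \<in> {i \<in> box n a. matches i \<sigma>}"
      by simp
    show "(\<Prod>j\<in>{1..n}. f j (if j \<in> {1..n} then g j else 0)) = (\<Prod>j\<in>{1..n}. f j (g j))"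
      by simp
  next
    fix i assume i: "i \<in> {i \<in> box n a. matches i \<sigma>}"
    show "(\<lambda>j. if j \<in> {1..n} then restrict i {1..n} j else 0) = i"
      using i by (auto simp: box_def fun_eq_iff)
    show "restrict i {1..n} \<in> PiE {1..n} (Bset a \<sigma>)"
      using i by (auto simp: box_def matches_def Bset_def split: option.splits)
  qed
  finally show ?thesis ..
qed

lemma single_sum: "Poly_Mapping.single k (sum f A) = (\<Sum>x\<in>A. Poly_Mapping.single k (f x))"
  by (induction A rule: infinite_finite_induct) (auto simp: single_add)

lemma phiv_xsum:
  assumes apos: "\<forall>j\<in>{1..n}. a j > 0" and \<sigma>: "\<sigma> \<in> good n a D"
  shows "evp (phiv n a D) (xsum n a \<sigma>) = (var \<sigma> :: ((nat \<Rightarrow> nat option) \<Rightarrow>\<^sub>0 nat) \<Rightarrow>\<^sub>0 'k::comm_ring_1)"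
proof -
  have \<sigma>S: "\<sigma> \<in> Svars n a D" using \<sigma> by (auto simp: good_def)
  let ?M = "{i \<in> box n a. matches i \<sigma>}"
  have coef: "(\<Sum>i\<in>?M. \<Prod>j\<in>{1..n}. (cf a j (i j) (\<tau> j) :: 'k)) = (if \<tau> = \<sigma> then 1 else 0)"
    if \<tau>: "\<tau> \<in> good n a D" for \<tau>
  proof -
    have "(\<Sum>i\<in>?M. \<Prod>j\<in>{1..n}. (cf a j (i j) (\<tau> j) :: 'k)) = (\<Prod>j\<in>{1..n}. \<Sum>t\<in>Bset a \<sigma> j. cf a j t (\<tau> j))"
      by (rule sum_box_prod[OF \<sigma>S])
    also have "\<dots> = (\<Prod>j\<in>{1..n}. if \<tau> j = \<sigma> j then 1 else 0)"
    proof (rule prod.cong[OF refl])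
      fix j assume j: "j \<in> {1..n}"
      show "(\<Sum>t\<in>Bset a \<sigma> j. cf a j t (\<tau> j)) = (if \<tau> j = \<sigma> j then (1::'k) else 0)"
        unfolding Bset_def
        by (rule factor) (use j apos \<sigma> \<tau> in \<open>auto simp: good_def Svars_def\<close>)
    qed
    also have "\<dots> = (if \<tau> = \<sigma> then 1 else 0)"
    proof (cases "\<tau> = \<sigma>")
      case True then show ?thesis by simp
    next
      case False
      then obtain j where "\<tau> j \<noteq> \<sigma> j" by auto
      moreover have "j \<in> {1..n}"
      proof (rule ccontr)
        assume "j \<notin> {1..n}"
        then have "\<tau> j = None" "\<sigma> j = None" using \<tau> \<sigma>S by (auto simp: good_def Svars_def)
        then show False using \<open>\<tau> j \<noteq> \<sigma> j\<close> by simp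
      qed
      ultimately show ?thesis using False
        by (subst prod_zero) auto
    qed
    finally show ?thesis .
  qed
  have "evp (phiv n a D) (xsum n a \<sigma>) = (\<Sum>i\<in>?M. (phiv n a D i :: ((nat \<Rightarrow> nat option) \<Rightarrow>\<^sub>0 nat) \<Rightarrow>\<^sub>0 'k))"
    by (simp add: xsum_def evp_sum matches_def)
  also have "\<dots> = (\<Sum>\<tau>\<in>good n a D. \<Sum>i\<in>?M. Poly_Mapping.single 0 (\<Prod>j\<in>{1..n}. (cf a j (i j) (\<tau> j) :: 'k)) * var \<tau>)"
    unfolding phiv_def by (rule sum.swap)
  also have "\<dots> = (\<Sum>\<tau>\<in>good n a D. Poly_Mapping.single 0 (\<Sum>i\<in>?M. \<Prod>j\<in>{1..n}. (cf a j (i j) (\<tau> j) :: 'k)) * var \<tau>)"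
    by (simp add: single_sum sum_distrib_right)
  also have "\<dots> = (\<Sum>\<tau>\<in>good n a D. if \<tau> = \<sigma> then var \<sigma> else 0)"
    by (rule sum.cong[OF refl]) (subst coef, assumption, auto)
  also have "\<dots> = var \<sigma>"
    using \<sigma> finite_subset[OF _ finite_Svars[of n a D]] by (simp add: sum.delta' good_def)
  finally show ?thesis .
qed



lemma gens_gen: "gens n a D (generators n a D)"
  by unfold_locales (rule generators_S)

lemma Svars_val:
  assumes "x \<in> Svars n a D" "x j = Some t"
  shows "j \<in> {1..n}" "t \<in> {1..a j}"
proof -
  show j: "j \<in> {1..n}" using assms by (auto simp: Svars_def)
  have "x j = None \<or> x j \<in> Some ` {1..a j}" using assms(1) j by (simp add: Svars_def)
  then show "t \<in> {1..a j}" using assms(2) by auto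
qed

definition bad :: "nat \<Rightarrow> (nat \<Rightarrow> nat) \<Rightarrow> (nat \<Rightarrow> nat option) \<Rightarrow> nat set" where
  "bad n a \<sigma> = {j \<in> {1..n}. \<sigma> j = Some (a j)}"

lemma T1_eq:
  assumes \<sigma>: "\<sigma> \<in> Svars n a D" and sc: "simplicial_complex n D"
    and j: "\<sigma> j = Some (a j)"
  shows "tuples_JK n a D {k. \<sigma> k \<noteq> None} ({k. \<sigma> k \<noteq> None} - {j}) (\<lambda>k. the (\<sigma> k))
     = (\<lambda>t. \<sigma>(j := Some t)) ` {1..a j}"
proof (rule set_eqI)
  let ?J = "{k. \<sigma> k \<noteq> None}"
  have JD: "?J \<in> D" using \<sigma> by (simp add: Svars_def)
  have jn: "j \<in> {1..n}" using \<sigma> j by (auto simp: Svars_def)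
  fix x
  show "x \<in> tuples_JK n a D ?J (?J - {j}) (\<lambda>k. the (\<sigma> k)) \<longleftrightarrow> x \<in> (\<lambda>t. \<sigma>(j := Some t)) ` {1..a j}"
  proof
    assume x: "x \<in> tuples_JK n a D ?J (?J - {j}) (\<lambda>k. the (\<sigma> k))"
    then have xS: "x \<in> Svars n a D" by (simp add: tuples_JK_def)
    have "x j \<noteq> None" using x j by (auto simp: tuples_JK_def)
    then obtain t where t: "x j = Some t" by auto
    then have tr: "t \<in> {1..a j}" using Svars_val[OF xS] by blast
    have "x = \<sigma>(j := Some t)"
    proof
      fix k show "x k = (\<sigma>(j := Some t)) k"
      proof (cases "k = j")
        case True then show ?thesis using t by simp
      next
        case False
        show ?thesis
        proof (cases "\<sigma> k = None")
          case True then show ?thesis using x False by (auto simp: tuples_JK_def)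
        next
          case nn: False
          then have "x k = Some (the (\<sigma> k))" using x False by (auto simp: tuples_JK_def)
          then show ?thesis using nn False by auto
        qed
      qed
    qed
    then show "x \<in> (\<lambda>t. \<sigma>(j := Some t)) ` {1..a j}" using tr by blast
  next
    assume "x \<in> (\<lambda>t. \<sigma>(j := Some t)) ` {1..a j}"
    then obtain t where t: "t \<in> {1..a j}" and x: "x = \<sigma>(j := Some t)" by blast
    have supp: "{k. x k \<noteq> None} = ?J" using x j by auto
    have "x \<in> Svars n a D"
      using \<sigma> t jn supp JD unfolding x Svars_def by auto
    then show "x \<in> tuples_JK n a D ?J (?J - {j}) (\<lambda>k. the (\<sigma> k))"
      unfolding tuples_JK_def using x j by auto
  qed
qed

lemma T2_eq:
  assumes \<sigma>: "\<sigma> \<in> Svars n a D" and sc: "simplicial_complex n D"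
    and j: "\<sigma> j = Some (a j)"
  shows "tuples_JK n a D ({k. \<sigma> k \<noteq> None} - {j}) {k. \<sigma> k \<noteq> None} (\<lambda>k. the (\<sigma> k))
     = {\<sigma>(j := None)}"
proof (rule set_eqI)
  let ?J = "{k. \<sigma> k \<noteq> None}"
  have JD: "?J \<in> D" using \<sigma> by (simp add: Svars_def)
  have KD: "?J - {j} \<in> D" using JD sc unfolding simplicial_complex_def by blast
  fix x
  show "x \<in> tuples_JK n a D (?J - {j}) ?J (\<lambda>k. the (\<sigma> k)) \<longleftrightarrow> x \<in> {\<sigma>(j := None)}"
  proof
    assume x: "x \<in> tuples_JK n a D (?J - {j}) ?J (\<lambda>k. the (\<sigma> k))"
    have "x = \<sigma>(j := None)"
    proof
      fix k show "x k = (\<sigma>(j := None)) k"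
      proof (cases "k \<in> ?J - {j}")
        case True
        then have "x k = Some (the (\<sigma> k))" using x by (auto simp: tuples_JK_def)
        then show ?thesis using True by auto
      next
        case False
        then have "x k = None" using x by (auto simp: tuples_JK_def)
        then show ?thesis using False by auto
      qed
    qed
    then show "x \<in> {\<sigma>(j := None)}" by simp
  next
    assume "x \<in> {\<sigma>(j := None)}"
    then have x: "x = \<sigma>(j := None)" by simp
    have supp: "{k. x k \<noteq> None} = ?J - {j}" using x by auto
    have "x \<in> Svars n a D"
      using \<sigma> supp KD unfolding x Svars_def by auto
    then show "x \<in> tuples_JK n a D (?J - {j}) ?J (\<lambda>k. the (\<sigma> k))"
      unfolding tuples_JK_def using x by auto
  qed
qed

lemma D_in_I:
  assumes apos: "\<forall>j\<in>{1..n}. a j > 0" and sc: "simplicial_complex n D"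
  shows "\<sigma> \<in> Svars n a D \<Longrightarrow> var \<sigma> - evp (phiv n a D) (tau n a (var \<sigma>))
     \<in> ideal_gen (S_ring n a D) (generators n a D :: (((nat \<Rightarrow> nat option) \<Rightarrow>\<^sub>0 nat) \<Rightarrow>\<^sub>0 'k::comm_ring_1) set)"
proof (induction "card (bad n a \<sigma>)" arbitrary: \<sigma> rule: less_induct)
  case less
  interpret g: gens n a D "generators n a D :: (((nat \<Rightarrow> nat option) \<Rightarrow>\<^sub>0 nat) \<Rightarrow>\<^sub>0 'k) set"
    by (rule gens_gen)
  let ?\<psi> = "\<lambda>p :: ((nat \<Rightarrow> nat option) \<Rightarrow>\<^sub>0 nat) \<Rightarrow>\<^sub>0 'k. evp (phiv n a D) (tau n a p)"
  let ?D = "\<lambda>\<sigma>. (var \<sigma> :: ((nat \<Rightarrow> nat option) \<Rightarrow>\<^sub>0 nat) \<Rightarrow>\<^sub>0 'k) - ?\<psi> (var \<sigma>)"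
  show ?case
  proof (cases "bad n a \<sigma> = {}")
    case True
    have "\<sigma> \<in> good n a D"
    proof -
      have "\<sigma> j \<noteq> Some (a j)" for j
      proof (cases "j \<in> {1..n}")
        case True then show ?thesis using \<open>bad n a \<sigma> = {}\<close> by (auto simp: bad_def)
      next
        case False then show ?thesis using less.prems by (auto simp: Svars_def)
      qed
      then show ?thesis using less.prems by (auto simp: good_def)
    qed
    then have "?\<psi> (var \<sigma>) = var \<sigma>"
      by (simp add: tau_var phiv_xsum[OF apos])
    then show ?thesis using I_zero by simp
  next
    case False
    then obtain j where jb: "j \<in> bad n a \<sigma>" by auto
    then have jn: "j \<in> {1..n}" and j: "\<sigma> j = Some (a j)" by (auto simp: bad_def)
    have aj: "a j > 0" using apos jn by auto
    let ?J = "{k. \<sigma> k \<noteq> None}"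
    let ?K = "?J - {j}"
    let ?c = "\<lambda>k. the (\<sigma> k)"
    let ?g = "gen_form n a D ?J ?K ?c :: ((nat \<Rightarrow> nat option) \<Rightarrow>\<^sub>0 nat) \<Rightarrow>\<^sub>0 'k"
    have JD: "?J \<in> D" using less.prems by (simp add: Svars_def)
    have KD: "?K \<in> D" using JD sc unfolding simplicial_complex_def by blast
    have cgood: "\<forall>k\<in>?J \<inter> ?K. ?c k \<in> {1..a k}"
    proof
      fix k assume k: "k \<in> ?J \<inter> ?K"
      then obtain y where y: "\<sigma> k = Some y" by auto
      show "?c k \<in> {1..a k}" using Svars_val[OF less.prems y] y by simp
    qed
    have gG: "?g \<in> generators n a D"
      unfolding generators_def using JD KD cgood by blast
    have inj: "inj_on (\<lambda>t. \<sigma>(j := Some t)) {1..a j}"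
      by (rule inj_onI) (metis fun_upd_same option.inject)
    have geq: "?g = (\<Sum>t\<in>{1..a j}. var (\<sigma>(j := Some t))) - var (\<sigma>(j := None))"
      unfolding gen_form_def T1_eq[OF less.prems sc j] T2_eq[OF less.prems sc j]
      by (subst sum.reindex[OF inj]) (simp add: o_def)
    have tg: "tau n a ?g = 0" by (rule tau_gen[OF sc JD KD])
    have "?g - ?\<psi> ?g \<in> g.I" using tg g.II_gen[OF gG] by simp
    moreover have "?g - ?\<psi> ?g = (\<Sum>t\<in>{1..a j}. ?D (\<sigma>(j := Some t))) - ?D (\<sigma>(j := None))"
      unfolding geq by (simp add: tau_evp evp_diff evp_sum sum_subtractf)
    ultimately have gI: "(\<Sum>t\<in>{1..a j}. ?D (\<sigma>(j := Some t))) - ?D (\<sigma>(j := None)) \<in> g.I" by simp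
    have split: "{1..a j} = insert (a j) {1..a j - 1}" using aj by auto
    have "(\<Sum>t\<in>{1..a j}. ?D (\<sigma>(j := Some t))) = ?D \<sigma> + (\<Sum>t\<in>{1..a j - 1}. ?D (\<sigma>(j := Some t)))"
      unfolding split using aj j by (simp add: fun_upd_idem)
    then have Deq: "?D \<sigma> = ((\<Sum>t\<in>{1..a j}. ?D (\<sigma>(j := Some t))) - ?D (\<sigma>(j := None)))
         - (\<Sum>t\<in>{1..a j - 1}. ?D (\<sigma>(j := Some t))) + ?D (\<sigma>(j := None))"
      by (simp add: algebra_simps)
    have finb: "finite (bad n a \<sigma>)" by (simp add: bad_def)
    have cardless: "card (bad n a \<sigma>') < card (bad n a \<sigma>)" if "bad n a \<sigma>' = bad n a \<sigma> - {j}" for \<sigma>'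
      unfolding that by (rule card_Diff1_less[OF finb jb])
    have IH1: "?D (\<sigma>(j := Some t)) \<in> g.I" if t: "t \<in> {1..a j - 1}" for t
    proof (rule less.hyps)
      have "\<sigma>(j := Some t) \<in> (\<lambda>t. \<sigma>(j := Some t)) ` {1..a j}" using t by auto
      then show "\<sigma>(j := Some t) \<in> Svars n a D"
        unfolding T1_eq[OF less.prems sc j, symmetric] by (simp add: tuples_JK_def)
      show "card (bad n a (\<sigma>(j := Some t))) < card (bad n a \<sigma>)"
        by (rule cardless) (use t in \<open>auto simp: bad_def\<close>)
    qed
    have IH2: "?D (\<sigma>(j := None)) \<in> g.I"
    proof (rule less.hyps)
      have "\<sigma>(j := None) \<in> {\<sigma>(j := None)}" by simp
      then show "\<sigma>(j := None) \<in> Svars n a D"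
        unfolding T2_eq[OF less.prems sc j, symmetric] by (simp add: tuples_JK_def)
      show "card (bad n a (\<sigma>(j := None))) < card (bad n a \<sigma>)"
        by (rule cardless) (auto simp: bad_def)
    qed
    have "((\<Sum>t\<in>{1..a j}. ?D (\<sigma>(j := Some t))) - ?D (\<sigma>(j := None)))
         - (\<Sum>t\<in>{1..a j - 1}. ?D (\<sigma>(j := Some t))) + ?D (\<sigma>(j := None)) \<in> g.I"
      by (intro g.II_add g.II_diff gI g.II_sum IH1 IH2)
    then show ?thesis using Deq by simp
  qed
qed


theorem proposition3p2:
  fixes n :: nat and a :: "nat \<Rightarrow> nat" and \<Delta> :: "nat set set"
  assumes "\<forall>j\<in>{1..n}. a j > 0"
    and "simplicial_complex n \<Delta>"
  shows "{p \<in> (S_ring n a \<Delta> :: (((nat \<Rightarrow> nat option) \<Rightarrow>\<^sub>0 nat) \<Rightarrow>\<^sub>0 'k::field) set).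
            tau n a p = 0}
         = ideal_gen (S_ring n a \<Delta>) (generators n a \<Delta>)"
proof -
  interpret g: gens n a \<Delta> "generators n a \<Delta> :: (((nat \<Rightarrow> nat option) \<Rightarrow>\<^sub>0 nat) \<Rightarrow>\<^sub>0 'k) set"
    by (rule gens_gen)
  show ?thesis
  proof (rule set_eqI, rule iffI)
    fix p :: "((nat \<Rightarrow> nat option) \<Rightarrow>\<^sub>0 nat) \<Rightarrow>\<^sub>0 'k"
    assume "p \<in> {p \<in> S_ring n a \<Delta>. tau n a p = 0}"
    then have pS: "p \<in> S_ring n a \<Delta>" and tp: "tau n a p = 0" by auto
    have "p - evp (phiv n a \<Delta>) (tau n a p) \<in> g.I"
    proof (rule g.congruence[where \<psi> = "\<lambda>p. evp (phiv n a \<Delta>) (tau n a p)"])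
      show "p \<in> S_ring n a \<Delta>" by (rule pS)
      fix v assume "v \<in> Svars n a \<Delta>"
      then show "var v - evp (phiv n a \<Delta>) (tau n a (var v)) \<in> g.I"
        by (rule D_in_I[OF assms])
    qed (simp_all add: tau_evp evp_sum evp_mult evp_prod evp_power)
    then show "p \<in> ideal_gen (S_ring n a \<Delta>) (generators n a \<Delta>)" using tp by simp
  next
    fix p :: "((nat \<Rightarrow> nat option) \<Rightarrow>\<^sub>0 nat) \<Rightarrow>\<^sub>0 'k"
    assume p: "p \<in> ideal_gen (S_ring n a \<Delta>) (generators n a \<Delta>)"
    have pS: "p \<in> S_ring n a \<Delta>" by (rule g.II_S[OF p])
    obtain F h where F: "p = (\<Sum>g\<in>F. h g * g)" "F \<subseteq> generators n a \<Delta>"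
      using p unfolding ideal_gen_def by blast
    have "tau n a p = (\<Sum>g\<in>F. tau n a (h g) * tau n a g)"
      unfolding F(1) by (simp add: tau_evp evp_sum evp_mult)
    also have "\<dots> = 0"
    proof (rule sum.neutral, rule ballI)
      fix x assume "x \<in> F"
      then have "tau n a x = 0" using F(2) tau_generators[OF assms(2), of x a] by blast
      then show "tau n a (h x) * tau n a x = 0" by simp
    qed
    finally show "p \<in> {p \<in> S_ring n a \<Delta>. tau n a p = 0}" using pS by simp
  qed
qed


end
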